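(* Let $\mathfrak m_1,\mathfrak m_1^*,\mathfrak m_2,\mathfrak m_2^*$ be complex-valued functions on the edges of the lattice strip, and $\phi_j=\int_{\gamma_0}\big(\mathfrak m_j(z)\psi(z)\,dz+\mathfrak m_j^*(z)\psi^*(z)\,d\bar z\big)$ for $j=1,2$. Then $$\phi_1\phi_2+\phi_2\phi_1=\Big(\int_{\gamma_0}\big(-2\,\mathfrak m_1(z)\mathfrak m_2(z)\,dz+2\,\mathfrak m_1^*(z)\mathfrak m_2^*(z)\,d\bar z\big)\Big)\,\mathrm{id}.$$
   Context: Fix integers $a<0<b$, $C=\{a,\dots,b\}$, $C^*=\{a+\frac12,\dots,b-\frac12\}$. $\tilde V$ has basis $(e_\rho)_{\rho\in\{\pm1\}^C}$. For $x'\in C^*$, $\varsigma_{x'}(\rho)$ flips the signs of $\rho_x$ for $x<x'$; $\psi_{x'}e_\rho=\frac{-\rho_{x'-1/2}+i\rho_{x'+1/2}}{\sqrt2}e_{\varsigma_{x'}(\rho)}$, $\psi^*_{x'}e_\rho=\frac{-i\rho_{x'-1/2}+\rho_{x'+1/2}}{\sqrt2}e_{\varsigma_{x'}(\rho)}$. The lattice strip has vertices $C\times\mathbb Z\subset\mathbb C$ and nearest-neighbour edges identified with midpoints; on horizontal edges $x'\in C^*$ at height 0, $\psi(x')=\psi_{x'}$, $\psi^*(x')=\psi^*_{x'}$. $\gamma_0=(a,a+1,\dots,b)$, and for a contour $(w_0,\dots,w_m)$ with $z_j$ the edge joining $w_{j-1},w_j$, $\int(\mathfrak m\psi\,dz+\mathfrak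 m^*\psi^*\,d\bar z)=\sum_j(\mathfrak m(z_j)\psi(z_j)(w_j-w_{j-1})+\mathfrak m^*(z_j)\psi^*(z_j)\overline{(w_j-w_{j-1})})$; scalar integrals $\int(g\,dz+h\,d\bar z)=\sum_j(g(z_j)(w_j-w_{j-1})+h(z_j)\overline{(w_j-w_{j-1})})$. *)

theory Defs
  imports Complex_Main
begin

text \<open>Spin configurations \<rho> \<in> {+1,-1}^C, C = {a..b}, encoded as functions
  int \<Rightarrow> int taking values in {-1,1} on C and the (irrelevant) value 1 off C.\<close>
definition configs :: "int \<Rightarrow> int \<Rightarrow> (int \<Rightarrow> int) set" where
  "configs a b = {\<rho>. \<forall>x. (x \<in> {a..b} \<longrightarrow> \<rho> x \<in> {-1, 1}) \<and> (x \<notin> {a..b} \<longrightarrow> \<rho> x = 1)}"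

type_synonym vec = "(int \<Rightarrow> int) \<Rightarrow> complex"
type_synonym op = "vec \<Rightarrow> vec"

definition Vt :: "int \<Rightarrow> int \<Rightarrow> vec set" where
  "Vt a b = {v. \<forall>\<rho>. \<rho> \<notin> configs a b \<longrightarrow> v \<rho> = 0}"

text \<open>A half-integer x' = k + 1/2 of C* is indexed by its integer part k \<in> {a..b-1}.
  varsigma flips \<rho>_x for all x \<in> C with x < k + 1/2, i.e. a \<le> x \<le> k.\<close>
definition varsigma :: "int \<Rightarrow> int \<Rightarrow> (int \<Rightarrow> int) \<Rightarrow> (int \<Rightarrow> int)" where
  "varsigma a k \<rho> = (\<lambda>x. if a \<le> x \<and> x \<le> k then - \<rho> x else \<rho> x)"

definition psi_coef :: "int \<Rightarrow> (int \<Rightarrow> int) \<Rightarrow> complex" where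
  "psi_coef k \<rho> = (- of_int (\<rho> k) + \<i> * of_int (\<rho> (k+1))) / sqrt 2"

definition psis_coef :: "int \<Rightarrow> (int \<Rightarrow> int) \<Rightarrow> complex" where
  "psis_coef k \<rho> = (- \<i> * of_int (\<rho> k) + of_int (\<rho> (k+1))) / sqrt 2"

text \<open>Linear extension of e_\<rho> \<mapsto> c(\<rho>) e_{\<varsigma>(\<rho>)}: since \<varsigma> is an involution of the
  configurations, the coefficient of e_\<sigma> in the image of v is c(\<varsigma> \<sigma>) v(\<varsigma> \<sigma>).\<close>
definition psi_op :: "int \<Rightarrow> int \<Rightarrow> int \<Rightarrow> op" where
  "psi_op a b k v = (\<lambda>\<sigma>. if \<sigma> \<in> configs a b
      then psi_coef k (varsigma a k \<sigma>) * v (varsigma a k \<sigma>) else 0)"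

definition psis_op :: "int \<Rightarrow> int \<Rightarrow> int \<Rightarrow> op" where
  "psis_op a b k v = (\<lambda>\<sigma>. if \<sigma> \<in> configs a b
      then psis_coef k (varsigma a k \<sigma>) * v (varsigma a k \<sigma>) else 0)"

text \<open>The fields \<psi>(z), \<psi>*(z) on edges (identified with midpoints z \<in> \<complex>); only the horizontal
  edges x' \<in> C* at height 0 are specified, elsewhere we put the zero operator (not used).\<close>
definition on_Cstar :: "int \<Rightarrow> int \<Rightarrow> complex \<Rightarrow> bool" where
  "on_Cstar a b z \<longleftrightarrow> (\<exists>k\<in>{a..b-1}. z = of_int k + 1/2)"

definition psi_field :: "int \<Rightarrow> int \<Rightarrow> complex \<Rightarrow> op" where
  "psi_field a b z = (if on_Cstar a b z then psi_op a b \<lfloor>Re z\<rfloor> else (\<lambda>v \<sigma>. 0))"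

definition psis_field :: "int \<Rightarrow> int \<Rightarrow> complex \<Rightarrow> op" where
  "psis_field a b z = (if on_Cstar a b z then psis_op a b \<lfloor>Re z\<rfloor> else (\<lambda>v \<sigma>. 0))"

text \<open>Contours as vertex lists (w_0,...,w_m); z_j the midpoint of the j-th edge.\<close>
definition gamma0 :: "int \<Rightarrow> int \<Rightarrow> complex list" where
  "gamma0 a b = map of_int [a..b]"

definition edge_mid :: "complex list \<Rightarrow> nat \<Rightarrow> complex" where
  "edge_mid ws j = (ws ! (j-1) + ws ! j) / 2"

definition edge_step :: "complex list \<Rightarrow> nat \<Rightarrow> complex" where
  "edge_step ws j = ws ! j - ws ! (j-1)"

definition op_integral ::
  "(complex \<Rightarrow> complex) \<Rightarrow> (complex \<Rightarrow> op) \<Rightarrow> (complex \<Rightarrow> complex) \<Rightarrow> (complex \<Rightarrow> op)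
    \<Rightarrow> complex list \<Rightarrow> op" where
  "op_integral m \<Psi> ms \<Psi>s ws v = (\<lambda>\<sigma>. \<Sum>j\<in>{1..<length ws}.
      m (edge_mid ws j) * edge_step ws j * \<Psi> (edge_mid ws j) v \<sigma>
    + ms (edge_mid ws j) * cnj (edge_step ws j) * \<Psi>s (edge_mid ws j) v \<sigma>)"

definition scalar_integral ::
  "(complex \<Rightarrow> complex) \<Rightarrow> (complex \<Rightarrow> complex) \<Rightarrow> complex list \<Rightarrow> complex" where
  "scalar_integral g h ws = (\<Sum>j\<in>{1..<length ws}.
      g (edge_mid ws j) * edge_step ws j + h (edge_mid ws j) * cnj (edge_step ws j))"

end

theory Submission
  imports Defs
begin

definition Cf :: "int \<Rightarrow> complex \<Rightarrow> complex \<Rightarrow> (int \<Rightarrow> int) \<Rightarrow> complex" where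
  "Cf k \<alpha> \<beta> \<rho> = \<alpha> * psi_coef k \<rho> + \<beta> * psis_coef k \<rho>"

definition gen :: "int \<Rightarrow> int \<Rightarrow> int \<Rightarrow> complex \<Rightarrow> complex \<Rightarrow> vec \<Rightarrow> vec" where
  "gen a b k \<alpha> \<beta> v = (\<lambda>\<sigma>. if \<sigma> \<in> configs a b then Cf k \<alpha> \<beta> (varsigma a k \<sigma>) * v (varsigma a k \<sigma>) else 0)"

lemma vs_invol: "varsigma a k (varsigma a k \<sigma>) = \<sigma>"
  by (auto simp: varsigma_def)

lemma vs_comm: "varsigma a k (varsigma a l \<sigma>) = varsigma a l (varsigma a k \<sigma>)"
  by (auto simp: varsigma_def)

lemma vs_configs: "\<sigma> \<in> configs a b \<Longrightarrow> k \<le> b \<Longrightarrow> varsigma a k \<sigma> \<in> configs a b"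
  by (auto simp: varsigma_def configs_def)

lemma diag_poly:
  fixes s t j A B \<alpha> \<beta> \<gamma> \<delta> :: complex
  assumes "s * s = 2" "A * A = 1" "B * B = 1" "t * s = 1" "j * j = -1"
  shows "(\<alpha> * ((- (-A) + j * B) * t) + \<beta> * ((- j * (-A) + B) * t))
       * (\<gamma> * ((- A + j * B) * t) + \<delta> * ((- j * A + B) * t))
     + (\<gamma> * ((- (-A) + j * B) * t) + \<delta> * ((- j * (-A) + B) * t))
       * (\<alpha> * ((- A + j * B) * t) + \<beta> * ((- j * A + B) * t))
     = -2*\<alpha>*\<gamma> + 2*\<beta>*\<delta>"
proof -
  have tt: "t * t * 2 = 1" using assms(1,4) by (metis mult.assoc mult.commute mult_1)
  have "(\<alpha> * ((- (-A) + j * B) * t) + \<beta> * ((- j * (-A) + B) * t))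
       * (\<gamma> * ((- A + j * B) * t) + \<delta> * ((- j * A + B) * t))
     + (\<gamma> * ((- (-A) + j * B) * t) + \<delta> * ((- j * (-A) + B) * t))
       * (\<alpha> * ((- A + j * B) * t) + \<beta> * ((- j * A + B) * t))
     = (t*t) * (4*(-\<alpha>*\<gamma> + \<beta>*\<delta>))" using assms(2,3,5) by algebra
  also have "\<dots> = (t*t*2) * (2*(-\<alpha>*\<gamma> + \<beta>*\<delta>))" by simp
  finally show ?thesis using tt by simp
qed

lemma diag:
  assumes "\<sigma> \<in> configs a b" "a \<le> k" "k \<le> b - 1"
  shows "Cf k \<alpha> \<beta> (varsigma a k \<sigma>) * Cf k \<gamma> \<delta> \<sigma> + Cf k \<gamma> \<delta> (varsigma a k \<sigma>) * Cf k \<alpha> \<beta> \<sigma>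
     = -2*\<alpha>*\<gamma> + 2*\<beta>*\<delta>"
proof -
  have "\<sigma> k \<in> {-1,1}" "\<sigma> (k+1) \<in> {-1,1}" using assms by (auto simp: configs_def)
  then have A: "of_int (\<sigma> k) * of_int (\<sigma> k) = (1::complex)" 
    and B: "of_int (\<sigma> (k+1)) * of_int (\<sigma> (k+1)) = (1::complex)" by auto
  have s: "complex_of_real (sqrt 2) * complex_of_real (sqrt 2) = 2"
  proof -
    have "complex_of_real (sqrt 2) * complex_of_real (sqrt 2) = complex_of_real (sqrt 2 * sqrt 2)"
      by (simp only: of_real_mult)
    also have "\<dots> = 2" by simp
    finally show ?thesis .
  qed
  have t: "inverse (complex_of_real (sqrt 2)) * complex_of_real (sqrt 2) = 1" by simp
  note D = diag_poly[OF s A B t, of \<i> \<alpha> \<beta> \<gamma> \<delta>]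
  have v1: "varsigma a k \<sigma> k = - \<sigma> k" "varsigma a k \<sigma> (k+1) = \<sigma> (k+1)"
    using assms by (auto simp: varsigma_def)
  have c1: "Cf k x y (varsigma a k \<sigma>) = x * ((- (- of_int (\<sigma> k)) + \<i> * of_int (\<sigma> (k+1))) * inverse (complex_of_real (sqrt 2)))
     + y * ((- \<i> * (- of_int (\<sigma> k)) + of_int (\<sigma> (k+1))) * inverse (complex_of_real (sqrt 2)))" for x y
    unfolding Cf_def psi_coef_def psis_coef_def v1 of_int_minus divide_inverse by (rule refl)
  have c2: "Cf k x y \<sigma> = x * ((- of_int (\<sigma> k) + \<i> * of_int (\<sigma> (k+1))) * inverse (complex_of_real (sqrt 2)))
     + y * ((- \<i> * of_int (\<sigma> k) + of_int (\<sigma> (k+1))) * inverse (complex_of_real (sqrt 2)))" for x y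
    unfolding Cf_def psi_coef_def psis_coef_def divide_inverse by (rule refl)
  show ?thesis unfolding c1 c2 by (rule D) simp
qed

lemma offdiag:
  assumes "a \<le> k" "k < l"
  shows "Cf k \<alpha> \<beta> (varsigma a k \<sigma>) * Cf l \<gamma> \<delta> (varsigma a l (varsigma a k \<sigma>))
       + Cf l \<gamma> \<delta> (varsigma a l \<sigma>) * Cf k \<alpha> \<beta> (varsigma a k (varsigma a l \<sigma>)) = 0"
proof -
  have e1: "Cf l \<gamma> \<delta> (varsigma a l (varsigma a k \<sigma>)) = Cf l \<gamma> \<delta> (varsigma a l \<sigma>)"
    using assms by (simp add: Cf_def psi_coef_def psis_coef_def varsigma_def)
  have e2: "Cf k \<alpha> \<beta> (varsigma a k (varsigma a l \<sigma>)) = - Cf k \<alpha> \<beta> (varsigma a k \<sigma>)"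
    using assms by (simp add: Cf_def psi_coef_def psis_coef_def varsigma_def field_simps)
  show ?thesis by (simp add: e1 e2)
qed

lemma compose:
  assumes "\<sigma> \<in> configs a b" "k \<le> b"
  shows "gen a b k \<alpha> \<beta> (gen a b l \<gamma> \<delta> v) \<sigma>
     = Cf k \<alpha> \<beta> (varsigma a k \<sigma>) * (Cf l \<gamma> \<delta> (varsigma a l (varsigma a k \<sigma>)) * v (varsigma a l (varsigma a k \<sigma>)))"
  using assms vs_configs[OF assms] by (simp add: gen_def)

lemma pair:
  assumes v: "v \<in> Vt a b" and k: "k \<in> {a..b-1}" and l: "l \<in> {a..b-1}"
  shows "gen a b k \<alpha> \<beta> (gen a b l \<gamma> \<delta> v) \<sigma> + gen a b l \<gamma> \<delta> (gen a b k \<alpha> \<beta> v) \<sigma>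
     = (if k = l then (-2*\<alpha>*\<gamma> + 2*\<beta>*\<delta>) * v \<sigma> else 0)"
proof (cases "\<sigma> \<in> configs a b")
  case False
  then show ?thesis using v by (simp add: gen_def Vt_def)
next
  case True
  have kb: "k \<le> b" "l \<le> b" using k l by auto
  show ?thesis
  proof (cases "k = l")
    case True
    have "gen a b k \<alpha> \<beta> (gen a b k \<gamma> \<delta> v) \<sigma> + gen a b k \<gamma> \<delta> (gen a b k \<alpha> \<beta> v) \<sigma>
      = (Cf k \<alpha> \<beta> (varsigma a k \<sigma>) * Cf k \<gamma> \<delta> \<sigma> + Cf k \<gamma> \<delta> (varsigma a k \<sigma>) * Cf k \<alpha> \<beta> \<sigma>) * v \<sigma>"
      by (simp add: compose[OF \<open>\<sigma> \<in> configs a b\<close> kb(1)] vs_invol algebra_simps)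
    also have "\<dots> = (-2*\<alpha>*\<gamma> + 2*\<beta>*\<delta>) * v \<sigma>"
      using diag[OF \<open>\<sigma> \<in> configs a b\<close>, of k \<alpha> \<beta> \<gamma> \<delta>] k by simp
    finally show ?thesis using True by simp
  next
    case False
    show ?thesis
    proof (cases "k < l")
      case True
      have "gen a b k \<alpha> \<beta> (gen a b l \<gamma> \<delta> v) \<sigma> + gen a b l \<gamma> \<delta> (gen a b k \<alpha> \<beta> v) \<sigma>
        = (Cf k \<alpha> \<beta> (varsigma a k \<sigma>) * Cf l \<gamma> \<delta> (varsigma a l (varsigma a k \<sigma>))
       + Cf l \<gamma> \<delta> (varsigma a l \<sigma>) * Cf k \<alpha> \<beta> (varsigma a k (varsigma a l \<sigma>))) * v (varsigma a l (varsigma a k \<sigma>))"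
        by (simp add: compose[OF \<open>\<sigma> \<in> configs a b\<close> kb(1)] compose[OF \<open>\<sigma> \<in> configs a b\<close> kb(2)]
             vs_comm[of a k l] algebra_simps)
      then show ?thesis using False offdiag[of a k l \<alpha> \<beta> \<sigma> \<gamma> \<delta>] k True by simp
    next
      case c2: False
      then have "l < k" using False by auto
      have "gen a b k \<alpha> \<beta> (gen a b l \<gamma> \<delta> v) \<sigma> + gen a b l \<gamma> \<delta> (gen a b k \<alpha> \<beta> v) \<sigma>
        = (Cf l \<gamma> \<delta> (varsigma a l \<sigma>) * Cf k \<alpha> \<beta> (varsigma a k (varsigma a l \<sigma>))
       + Cf k \<alpha> \<beta> (varsigma a k \<sigma>) * Cf l \<gamma> \<delta> (varsigma a l (varsigma a k \<sigma>))) * v (varsigma a k (varsigma a l \<sigma>))"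
        by (simp add: compose[OF \<open>\<sigma> \<in> configs a b\<close> kb(1)] compose[OF \<open>\<sigma> \<in> configs a b\<close> kb(2)]
             vs_comm[of a l k] algebra_simps)
      then show ?thesis using False offdiag[of a l k \<gamma> \<delta> \<sigma> \<alpha> \<beta>] l \<open>l < k\<close> by simp
    qed
  qed
qed

lemma gen_sum: "gen a b k \<alpha> \<beta> (\<lambda>\<sigma>. \<Sum>l\<in>L. f l \<sigma>) \<sigma> = (\<Sum>l\<in>L. gen a b k \<alpha> \<beta> (f l) \<sigma>)"
  by (simp add: gen_def sum_distrib_left)

lemma reindex:
  assumes "a \<le> b"
  shows "(\<Sum>j\<in>{1..<length (gamma0 a b)}. F (edge_mid (gamma0 a b) j) (edge_step (gamma0 a b) j))
       = (\<Sum>k\<in>{a..b-1}. F (of_int k + 1/2) 1)"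
proof (rule sum.reindex_bij_witness[where i = "\<lambda>k. nat (k - a + 1)" and j = "\<lambda>j. a + int j - 1"])
  fix k assume k: "k \<in> {a..b-1}"
  then show "a + int (nat (k - a + 1)) - 1 = k" by auto
  show "nat (k - a + 1) \<in> {1..<length (gamma0 a b)}" using k by (auto simp: gamma0_def)
next
  fix j assume j: "j \<in> {1..<length (gamma0 a b)}"
  then show "nat (a + int j - 1 - a + 1) = j" by auto
  show "a + int j - 1 \<in> {a..b-1}" using j by (auto simp: gamma0_def)
  have j1: "gamma0 a b ! j = of_int (a + int j)" using j by (auto simp: gamma0_def nth_upto)
  have j0: "gamma0 a b ! (j - Suc 0) = of_int (a + int j - 1)" using j
    by (auto simp: gamma0_def nth_upto of_nat_diff)
  show "F (of_int (a + int j - 1) + 1 / 2) 1 = F (edge_mid (gamma0 a b) j) (edge_step (gamma0 a b) j)"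
    by (simp add: edge_mid_def edge_step_def j0 j1 field_simps)
qed

lemma field_at:
  assumes "k \<in> {a..b-1}"
  shows "psi_field a b (of_int k + 1/2) = psi_op a b k"
    "psis_field a b (of_int k + 1/2) = psis_op a b k"
proof -
  have o: "on_Cstar a b (of_int k + 1/2)" using assms unfolding on_Cstar_def by blast
  have f: "\<lfloor>Re (of_int k + 1/2 :: complex)\<rfloor> = k" by (simp add: floor_eq_iff)
  show "psi_field a b (of_int k + 1/2) = psi_op a b k"
    "psis_field a b (of_int k + 1/2) = psis_op a b k"
    using o f by (simp_all add: psi_field_def psis_field_def)
qed

lemma expand:
  assumes "a \<le> b"
  shows "op_integral m (psi_field a b) ms (psis_field a b) (gamma0 a b) v
     = (\<lambda>\<sigma>. \<Sum>k\<in>{a..b-1}. gen a b k (m (of_int k + 1/2)) (ms (of_int k + 1/2)) v \<sigma>)"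
proof
  fix \<sigma>
  have "op_integral m (psi_field a b) ms (psis_field a b) (gamma0 a b) v \<sigma>
     = (\<Sum>k\<in>{a..b-1}. m (of_int k + 1/2) * 1 * psi_field a b (of_int k + 1/2) v \<sigma>
         + ms (of_int k + 1/2) * cnj 1 * psis_field a b (of_int k + 1/2) v \<sigma>)"
    unfolding op_integral_def
    by (rule reindex[OF assms, where F = "\<lambda>z s. m z * s * psi_field a b z v \<sigma> + ms z * cnj s * psis_field a b z v \<sigma>"])
  also have "\<dots> = (\<Sum>k\<in>{a..b-1}. gen a b k (m (of_int k + 1/2)) (ms (of_int k + 1/2)) v \<sigma>)"
    by (rule sum.cong) (auto simp: field_at gen_def psi_op_def psis_op_def Cf_def algebra_simps)
  finally show "op_integral m (psi_field a b) ms (psis_field a b) (gamma0 a b) v \<sigma>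
     = (\<Sum>k\<in>{a..b-1}. gen a b k (m (of_int k + 1/2)) (ms (of_int k + 1/2)) v \<sigma>)" .
qed

theorem proposition3p12:
  fixes a b :: int and m1 m1s m2 m2s :: "complex \<Rightarrow> complex"
  assumes "a < 0" and "0 < b"
  defines "\<phi>1 \<equiv> op_integral m1 (psi_field a b) m1s (psis_field a b) (gamma0 a b)"
      and "\<phi>2 \<equiv> op_integral m2 (psi_field a b) m2s (psis_field a b) (gamma0 a b)"
  shows "\<forall>v\<in>Vt a b. (\<lambda>\<sigma>. \<phi>1 (\<phi>2 v) \<sigma> + \<phi>2 (\<phi>1 v) \<sigma>)
     = (\<lambda>\<sigma>. scalar_integral (\<lambda>z. -2 * m1 z * m2 z) (\<lambda>z. 2 * m1s z * m2s z) (gamma0 a b) * v \<sigma>)"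
proof
  fix v assume v: "v \<in> Vt a b"
  have ab: "a \<le> b" using assms by simp
  define K where "K = {a..b-1}"
  define A1 where "A1 k = m1 (of_int k + 1/2)" for k :: int
  define B1 where "B1 k = m1s (of_int k + 1/2)" for k :: int
  define A2 where "A2 k = m2 (of_int k + 1/2)" for k :: int
  define B2 where "B2 k = m2s (of_int k + 1/2)" for k :: int
  have e1: "\<phi>1 w = (\<lambda>\<sigma>. \<Sum>k\<in>K. gen a b k (A1 k) (B1 k) w \<sigma>)" for w
    unfolding assms(3) K_def A1_def B1_def by (rule expand[OF ab])
  have e2: "\<phi>2 w = (\<lambda>\<sigma>. \<Sum>k\<in>K. gen a b k (A2 k) (B2 k) w \<sigma>)" for w
    unfolding assms(4) K_def A2_def B2_def by (rule expand[OF ab])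
  have sc: "scalar_integral (\<lambda>z. -2 * m1 z * m2 z) (\<lambda>z. 2 * m1s z * m2s z) (gamma0 a b)
      = (\<Sum>k\<in>K. -2 * A1 k * A2 k + 2 * B1 k * B2 k)"
    unfolding scalar_integral_def K_def A1_def A2_def B1_def B2_def
    by (subst reindex[OF ab, where F = "\<lambda>z s. -2 * m1 z * m2 z * s + 2 * m1s z * m2s z * cnj s"]) simp
  show "(\<lambda>\<sigma>. \<phi>1 (\<phi>2 v) \<sigma> + \<phi>2 (\<phi>1 v) \<sigma>)
     = (\<lambda>\<sigma>. scalar_integral (\<lambda>z. -2 * m1 z * m2 z) (\<lambda>z. 2 * m1s z * m2s z) (gamma0 a b) * v \<sigma>)"
  proof
    fix \<sigma>
    have "\<phi>1 (\<phi>2 v) \<sigma> + \<phi>2 (\<phi>1 v) \<sigma>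
      = (\<Sum>k\<in>K. \<Sum>l\<in>K. gen a b k (A1 k) (B1 k) (gen a b l (A2 l) (B2 l) v) \<sigma>)
      + (\<Sum>k\<in>K. \<Sum>l\<in>K. gen a b k (A2 k) (B2 k) (gen a b l (A1 l) (B1 l) v) \<sigma>)"
      by (simp add: e1 e2 gen_sum)
    also have "(\<Sum>k\<in>K. \<Sum>l\<in>K. gen a b k (A2 k) (B2 k) (gen a b l (A1 l) (B1 l) v) \<sigma>)
       = (\<Sum>k\<in>K. \<Sum>l\<in>K. gen a b l (A2 l) (B2 l) (gen a b k (A1 k) (B1 k) v) \<sigma>)"
      by (rule sum.swap)
    also have "(\<Sum>k\<in>K. \<Sum>l\<in>K. gen a b k (A1 k) (B1 k) (gen a b l (A2 l) (B2 l) v) \<sigma>)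
       + (\<Sum>k\<in>K. \<Sum>l\<in>K. gen a b l (A2 l) (B2 l) (gen a b k (A1 k) (B1 k) v) \<sigma>)
       = (\<Sum>k\<in>K. \<Sum>l\<in>K. (if k = l then (-2 * A1 k * A2 l + 2 * B1 k * B2 l) * v \<sigma> else 0))"
      unfolding sum.distrib[symmetric]
      by (rule sum.cong[OF refl], rule sum.cong[OF refl]) (rule pair[OF v], auto simp: K_def)
    also have "\<dots> = (\<Sum>k\<in>K. (-2 * A1 k * A2 k + 2 * B1 k * B2 k) * v \<sigma>)"
      by (rule sum.cong[OF refl]) (simp add: K_def)
    also have "\<dots> = scalar_integral (\<lambda>z. -2 * m1 z * m2 z) (\<lambda>z. 2 * m1s z * m2s z) (gamma0 a b) * v \<sigma>"
      unfolding sc by (simp add: sum_distrib_right)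
    finally show "\<phi>1 (\<phi>2 v) \<sigma> + \<phi>2 (\<phi>1 v) \<sigma>
      = scalar_integral (\<lambda>z. -2 * m1 z * m2 z) (\<lambda>z. 2 * m1s z * m2s z) (gamma0 a b) * v \<sigma>" .
  qed
qed

end
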